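(* Let $q > 1$ be an integer. For all positive integers $n$ and $M$, $$|C(n,q,M)| \leq \left(\frac{q}{q-1}\right)^{n-1}q^{M-2^n+n+1}.$$
   Context: Fix the alphabet $\{x_0,\ldots,x_{q-1}\}$ of $q$ letters. A word $W$ is an instance of a word $V = y_0y_1\cdots y_{m-1}$ (each $y_i$ a letter) if $W = A_0A_1\cdots A_{m-1}$ with each $A_i$ a nonempty word and $A_i = A_j$ whenever $y_i = y_j$. The Zimin words are defined by $Z_0 := \varepsilon$ (the empty word) and $Z_{n+1} := Z_n z_n Z_n$ for distinct letters $z_0,z_1,\dots$. $C(n,q,M)$ denotes the set of words $W \in \{x_0,\ldots,x_{q-1}\}^M$ that are instances of $Z_n$. *)

theory Defs
  imports Main Complex_Main
begin

(* Words over the alphabet {x_0,...,x_{q-1}} are lists of naturals with entries < q.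
   Pattern letters z_0, z_1, ... are encoded as natural numbers 0, 1, ... *)

fun zimin :: "nat \<Rightarrow> nat list" where
  "zimin 0 = []"
| "zimin (Suc n) = zimin n @ [n] @ zimin n"

definition is_instance :: "'a list \<Rightarrow> 'b list \<Rightarrow> bool" where
  "is_instance W V \<longleftrightarrow>
     (\<exists>f :: 'b \<Rightarrow> 'a list. (\<forall>y \<in> set V. f y \<noteq> []) \<and> W = concat (map f V))"

definition C :: "nat \<Rightarrow> nat \<Rightarrow> nat \<Rightarrow> nat list set" where
  "C n q M = {W. length W = M \<and> set W \<subseteq> {..<q} \<and> is_instance W (zimin n)}"

end

theory Submission
  imports Defs
begin

lemma geo_bound:
  fixes x :: real
  assumes "0 \<le> x" "x < 1" "finite S" "\<forall>m\<in>S. a \<le> m"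
  shows "(\<Sum>m\<in>S. x ^ m) \<le> x ^ a / (1 - x)"
proof -
  have inj: "inj_on (\<lambda>m. m - a) S" unfolding inj_on_def by (metis assms(4) le_add_diff_inverse2)
  have "(\<Sum>m\<in>S. x ^ m) = (\<Sum>m\<in>S. x ^ ((m - a) + a))"
    using assms(4) by (intro sum.cong) auto
  also have "\<dots> = (\<Sum>j\<in>(\<lambda>m. m - a) ` S. x ^ (j + a))"
    using inj by (simp add: sum.reindex)
  also have "\<dots> \<le> (\<Sum>j. x ^ (j + a))"
  proof (rule sum_le_suminf)
    have "(\<lambda>j. x ^ a * x ^ j) sums (x ^ a * (1 / (1 - x)))"
      by (rule sums_mult) (use assms in \<open>auto intro: geometric_sums\<close>)
    then show "summable (\<lambda>j. x ^ (j + a))"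
      by (simp add: power_add mult.commute sums_summable)
  qed (use assms in auto)
  also have "\<dots> = x ^ a / (1 - x)"
  proof -
    have "(\<lambda>j. x ^ a * x ^ j) sums (x ^ a * (1 / (1 - x)))"
      by (rule sums_mult) (use assms in \<open>auto intro: geometric_sums\<close>)
    then have "(\<lambda>j. x ^ (j + a)) sums (x ^ a / (1 - x))"
      by (simp add: power_add mult.commute)
    then show ?thesis by (simp add: sums_iff)
  qed
  finally show ?thesis .
qed

lemma length_zimin: "length (zimin n) = 2 ^ n - 1"
proof (induction n)
  case (Suc n)
  have "(1::nat) \<le> 2 ^ n" by simp
  then show ?case using Suc by simp
qed simp

lemma len_ge: "\<forall>y\<in>set V. f y \<noteq> [] \<Longrightarrow> length V \<le> length (concat (map f V))"
  apply (induction V)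
   apply simp
  apply simp
proof -
  fix a V assume h: "length V \<le> length (concat (map f V))" "f a \<noteq> [] \<and> (\<forall>y\<in>set V. f y \<noteq> [])"
  then have "1 \<le> length (f a)" by (cases "f a") auto
  with h(1) show "Suc (length V) \<le> length (f a) + length (concat (map f V))" by linarith
qed

lemma instance_len: "is_instance W (zimin n) \<Longrightarrow> 2 ^ n - 1 \<le> length W"
  unfolding is_instance_def using len_ge length_zimin by metis

lemma instance_step:
  assumes "is_instance W (zimin (Suc n))"
  shows "\<exists>U A. W = U @ A @ U \<and> A \<noteq> [] \<and> is_instance U (zimin n)"
proof -
  obtain f where f: "\<forall>y\<in>set (zimin (Suc n)). f y \<noteq> []" "W = concat (map f (zimin (Suc n)))"
    using assms unfolding is_instance_def by blast
  define U where "U = concat (map f (zimin n))"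
  have "W = U @ f n @ U" using f(2) by (simp add: U_def)
  moreover have "f n \<noteq> []" using f(1) by simp
  moreover have "is_instance U (zimin n)" unfolding is_instance_def U_def
    using f(1) by auto
  ultimately show ?thesis by blast
qed

definition L :: "nat \<Rightarrow> nat \<Rightarrow> nat list set" where
  "L q k = {A. set A \<subseteq> {..<q} \<and> length A = k}"

lemma card_L: "card (L q k) = q ^ k"
  unfolding L_def by (simp add: card_lists_length_eq)

lemma fin_L: "finite (L q k)"
  unfolding L_def by (simp add: finite_lists_length_eq)

lemma fin_C: "finite (C n q m)"
proof -
  have "C n q m \<subseteq> L q m" unfolding C_def L_def by auto
  then show ?thesis using fin_L finite_subset by blast
qed

lemma C1: "M > 0 \<Longrightarrow> C 1 q M = L q M"
  unfolding C_def L_def is_instance_def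
  by (auto intro!: exI[of _ "\<lambda>_. _"])

lemma card_step:
  "card (C (Suc n) q M) \<le> (\<Sum>m\<in>{m. 2 ^ n - 1 \<le> m \<and> 2 * m < M}. card (C n q m) * q ^ (M - 2 * m))"
proof -
  let ?S = "{m. 2 ^ n - 1 \<le> m \<and> 2 * m < M}"
  have finS: "finite ?S" by (rule finite_subset[of _ "{..<M}"]) auto
  have sub: "C (Suc n) q M \<subseteq> (\<Union>m\<in>?S. (\<lambda>(U,A). U @ A @ U) ` (C n q m \<times> L q (M - 2 * m)))"
  proof
    fix W assume W: "W \<in> C (Suc n) q M"
    then obtain U A where UA: "W = U @ A @ U" "A \<noteq> []" "is_instance U (zimin n)"
      using instance_step unfolding C_def by blast
    have "2 ^ n - 1 \<le> length U" using instance_len UA(3) .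
    moreover have "2 * length U < M" using W UA(1,2) unfolding C_def by auto
    moreover have "U \<in> C n q (length U)" using W UA unfolding C_def by auto
    moreover have "A \<in> L q (M - 2 * length U)" using W UA unfolding C_def L_def by auto
    ultimately show "W \<in> (\<Union>m\<in>?S. (\<lambda>(U,A). U @ A @ U) ` (C n q m \<times> L q (M - 2 * m)))"
      using UA(1) by force
  qed
  have "card (C (Suc n) q M) \<le> card (\<Union>m\<in>?S. (\<lambda>(U,A). U @ A @ U) ` (C n q m \<times> L q (M - 2 * m)))"
    by (rule card_mono[OF _ sub]) (use finS fin_C fin_L in auto)
  also have "\<dots> \<le> (\<Sum>m\<in>?S. card ((\<lambda>(U,A). U @ A @ U) ` (C n q m \<times> L q (M - 2 * m))))"
    by (rule card_UN_le[OF finS])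
  also have "\<dots> \<le> (\<Sum>m\<in>?S. card (C n q m \<times> L q (M - 2 * m)))"
    by (intro sum_mono card_image_le) (use fin_C fin_L in auto)
  also have "\<dots> = (\<Sum>m\<in>?S. card (C n q m) * q ^ (M - 2 * m))"
    by (simp add: card_cartesian_product card_L)
  finally show ?thesis .
qed

lemma main_bound:
  assumes q: "q > 1"
  shows "M > 0 \<Longrightarrow> real (card (C (Suc n) q M))
           \<le> (real q / (real q - 1)) ^ n * real q ^ (M + n + 2) / real q ^ (2 ^ Suc n)"
proof (induction n arbitrary: M)
  case 0
  have "real q ^ (M + 2) / real q ^ 2 = real q ^ M" using q by (simp add: power_add power2_eq_square)
  then show ?case using C1[OF 0] by (simp add: card_L)
next
  case (Suc n)
  define K where "K = real q / (real q - 1)"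
  define x where "x = 1 / real q"
  define a where "a = (2::nat) ^ Suc n - 1"
  define S where "S = {m. a \<le> m \<and> 2 * m < M}"
  define c where "c = K ^ n * real q ^ (M + n + 2) / real q ^ (2 ^ Suc n)"
  have qpos: "real q > 0" using q by simp
  have finS: "finite S" unfolding S_def by (rule finite_subset[of _ "{..<M}"]) auto
  have a1: "1 \<le> a"
  proof -
    have "(1::nat) \<le> 2 ^ n" by simp
    then have "(1::nat) \<le> 2 * 2 ^ n - 1" by linarith
    then show ?thesis unfolding a_def by simp
  qed
  have "real (card (C (Suc (Suc n)) q M)) \<le> real (\<Sum>m\<in>S. card (C (Suc n) q m) * q ^ (M - 2 * m))"
    using card_step[of "Suc n" q M] unfolding S_def a_def by linarith
  also have "\<dots> = (\<Sum>m\<in>S. real (card (C (Suc n) q m)) * real q ^ (M - 2 * m))"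
    by simp
  also have "\<dots> \<le> (\<Sum>m\<in>S. c * x ^ m)"
  proof (rule sum_mono)
    fix m assume m: "m \<in> S"
    then have mpos: "m > 0" "2 * m < M" using a1 unfolding S_def by auto
    have e: "real q ^ (m + n + 2) * real q ^ (M - 2 * m) = real q ^ (M + n + 2) * x ^ m"
    proof -
      have "real q ^ (m + n + 2) * real q ^ (M - 2 * m) * real q ^ m
           = real q ^ (M + n + 2)"
        unfolding power_add[symmetric] using mpos by (intro arg_cong[where f="\<lambda>k. real q ^ k"]) linarith
      then show ?thesis unfolding x_def using qpos
        by (simp add: power_one_over field_simps)
    qed
    have "real (card (C (Suc n) q m)) * real q ^ (M - 2 * m)
          \<le> K ^ n * real q ^ (m + n + 2) / real q ^ (2 ^ Suc n) * real q ^ (M - 2 * m)"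
      using Suc.IH[OF mpos(1)] unfolding K_def by (intro mult_right_mono) auto
    also have "\<dots> = K ^ n * (real q ^ (m + n + 2) * real q ^ (M - 2 * m)) / real q ^ (2 ^ Suc n)"
      by simp
    also have "\<dots> = c * x ^ m" unfolding c_def e by simp
    finally show "real (card (C (Suc n) q m)) * real q ^ (M - 2 * m) \<le> c * x ^ m" .
  qed
  also have "\<dots> = c * (\<Sum>m\<in>S. x ^ m)" by (simp add: sum_distrib_left)
  also have "\<dots> \<le> c * (x ^ a / (1 - x))"
  proof (rule mult_left_mono)
    show "(\<Sum>m\<in>S. x ^ m) \<le> x ^ a / (1 - x)"
      by (rule geo_bound) (use q finS in \<open>auto simp: x_def S_def\<close>)
    have "K \<ge> 0" unfolding K_def using q by simp
    then show "c \<ge> 0" unfolding c_def by simp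
  qed
  also have "\<dots> = K ^ Suc n * real q ^ (M + Suc n + 2) / real q ^ (2 ^ Suc (Suc n))"
  proof -
    have xa: "x ^ a = real q / real q ^ (2 ^ Suc n)"
    proof -
      have "x ^ a * real q ^ (2 ^ Suc n) = x ^ a * real q ^ (a + 1)"
        using a1 unfolding a_def by simp
      also have "\<dots> = real q" using qpos unfolding x_def by (simp add: power_add power_one_over)
      finally show ?thesis using qpos by (simp add: field_simps)
    qed
    have ix: "1 / (1 - x) = K" unfolding K_def x_def using q by (simp add: field_simps)
    have p2: "real q ^ (2 ^ Suc (Suc n)) = real q ^ (2 ^ Suc n) * real q ^ (2 ^ Suc n)"
      by (simp add: power_add[symmetric] del: power_Suc) (simp)
    have "c * (x ^ a / (1 - x)) = c * x ^ a * (1 / (1 - x))" by simp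
    also have "\<dots> = K ^ n * real q ^ (M + n + 2) / real q ^ (2 ^ Suc n) * (real q / real q ^ (2 ^ Suc n)) * K"
      unfolding c_def xa ix ..
    also have "\<dots> = K ^ Suc n * (real q ^ (M + n + 2) * real q) / (real q ^ (2 ^ Suc n) * real q ^ (2 ^ Suc n))"
      by (simp add: field_simps)
    also have "\<dots> = K ^ Suc n * real q ^ (M + Suc n + 2) / real q ^ (2 ^ Suc (Suc n))"
      unfolding p2 by simp
    finally show ?thesis .
  qed
  finally show ?case unfolding K_def .
qed

theorem mainTheorem5:
  fixes q n M :: nat
  assumes "q > 1" and "n > 0" and "M > 0"
  shows "real (card (C n q M))
           \<le> (real q / (real q - 1)) ^ (n - 1) * real q powi (int M - 2 ^ n + int n + 1)"
proof -
  obtain k where k: "n = Suc k" using assms(2) by (cases n) auto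
  have qpos: "real q > 0" using assms(1) by simp
  have "real q powi (int M - 2 ^ n + int n + 1) = real q powi (int (M + k + 2) - int (2 ^ Suc k))"
  proof -
    have "int M - 2 ^ n + int n + 1 = int (M + k + 2) - int (2 ^ Suc k)" using k by simp
    then show ?thesis by (rule arg_cong)
  qed
  also have "\<dots> = real q ^ (M + k + 2) / real q ^ (2 ^ Suc k)"
  proof -
    have ne: "real q \<noteq> 0" using qpos by simp
    show ?thesis by (simp only: power_int_diff[OF disjI1[OF ne]] power_int_of_nat)
  qed
  finally have e: "real q powi (int M - 2 ^ n + int n + 1) = real q ^ (M + k + 2) / real q ^ (2 ^ Suc k)" .
  show ?thesis using main_bound[OF assms(1) assms(3), of k] k e by simp
qed

end
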